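(* On every interface element $T$ on which the IFE shape functions are unisolvent, for all $X\in T$, all choices $\overline X_i\in l$, $s=\pm$ ($s'$ opposite), and $j,k=1,2$: $$\sum_{i\in\mathcal I}(A_i-X)^T\otimes\Phi^s_i(X)+\sum_{i\in\mathcal I^{s'}}\big((A_i-\overline X_i)^T\otimes\Phi^s_i(X)\big)(\overline M^s-I_4)=0_{2\times4},$$ $$\sum_{i\in\mathcal I}(A_i-X)^T\otimes\partial_{x_j}\Phi^s_i(X)+\sum_{i\in\mathcal I^{s'}}\big((A_i-\overline X_i)^T\otimes\partial_{x_j}\Phi^s_i(X)\big)(\overline M^s-I_4)=I^j,$$ $$\sum_{i\in\mathcal I}(A_i-X)^T\otimes\partial_{x_jx_k}\Phi^s_i(X)+\sum_{i\in\mathcal I^{s'}}\big((A_i-\overline X_i)^T\otimes\partial_{x_jx_k}\Phi^s_i(X)\big)(\overline M^s-I_4)=0_{2\times4},$$ where $I^1=[I_2,0_{2\times2}]$ and $I^2=[0_{2\times2},I_2]$.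
   Context: Lamé parameters $\lambda^\pm,\mu^\pm>0$; stress $\sigma^s(\mathbf v)=\lambda^s(\nabla\cdot\mathbf v)I+2\mu^s\epsilon(\mathbf v)$. $T$ is a triangle with $\Pi_T=[\mathrm{span}\{1,x,y\}]^2$ and nodes its vertices, or a square with $\Pi_T=[\mathrm{span}\{1,x,y,xy\}]^2$ and nodes its vertices, or a square with $\Pi_T=[\mathrm{span}\{1,x,y,x^2-y^2\}]^2$ and nodes its edge midpoints; $\mathcal I$ the node index set. $\Gamma$ meets $\partial T$ at $D,E$; $l$ is the line through them with unit normal $\bar{\mathbf n}=(\bar n_1,\bar n_2)$; $l$ splits $T$ into $\overline T^\pm$; $\mathcal I^s=\{i:A_i\in T\cap\Omega^s\}$. IFE shape functions $\boldsymbol\phi_{i,T}$ ($1\le i\le2|\mathcal I|$) are the piecewise functions $\boldsymbol\phi^s\in\Pi_T$ on $\overline T^s$, continuous across $l$, with (square cases) equal coefficient vectors of $xy$ (resp. $x^2-y^2$), satisfying $\sigma^+(\boldsymbol\phi^+)(F)\bar{\mathbf n}=\sigma^-(\boldsymbol\phi^-)(F)\bar{\mathbf n}$ at a fixed $F\in l$, with $\boldsymbol\phi_{i,T}(A_j)=(\delta_{ij},0)^T$ ($i\le|\mathcal I|$), $(0,\delta_{i-|\mathcal I|,j})^T$ ($i>|\mathcal I|$); unisolvent means nodal values determine IFE functions uniquely. $\Phi_{i,T}=[\boldsymbol\phi_{i,T},\boldsymbol\phi_{i+|\mathcal I|,T}]$, and $\Phi^s_i$ is the $2\times2$ matrix polynomial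 equal to $\Phi_{i,T}$ on $\overline T^s$. $\overline N^s$ is the $4\times4$ matrix with rows $((\lambda^s+2\mu^s)\bar n_1,\mu^s\bar n_2,\mu^s\bar n_2,\lambda^s\bar n_1)$, $(\lambda^s\bar n_2,\mu^s\bar n_1,\mu^s\bar n_1,(\lambda^s+2\mu^s)\bar n_2)$, $(-\bar n_2,0,\bar n_1,0)$, $(0,-\bar n_2,0,\bar n_1)$; $\overline M^-=(\overline N^+)^{-1}\overline N^-$, $\overline M^+=(\overline N^-)^{-1}\overline N^+$. $\otimes$ is the Kronecker product. *)

theory Defs
  imports "HOL-Analysis.Analysis"
begin

(* Kind of element: triangle with P1; square with bilinear Q1 (vertex nodes);
   square with rotated Q1 (edge-midpoint nodes). *)
datatype elem_kind = Tri | BilinSq | RotSq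

definition nnodes :: "elem_kind \<Rightarrow> nat" where
  "nnodes K = (if K = Tri then 3 else 4)"

definition pbasis :: "elem_kind \<Rightarrow> nat \<Rightarrow> real^2 \<Rightarrow> real" where
  "pbasis K k X =
     (if k = 0 then 1 else if k = 1 then X$1 else if k = 2 then X$2
      else if K = BilinSq then X$1 * X$2 else (X$1)^2 - (X$2)^2)"

definition polyv :: "elem_kind \<Rightarrow> (nat \<Rightarrow> real^2) \<Rightarrow> real^2 \<Rightarrow> real^2" where
  "polyv K c X = (\<Sum>k<nnodes K. pbasis K k X *\<^sub>R c k)"

definition is_element :: "elem_kind \<Rightarrow> (real^2) set \<Rightarrow> (nat \<Rightarrow> real^2) \<Rightarrow> bool" where
  "is_element K T A =
     (inj_on A {..<nnodes K} \<and>
      (if K = Tri then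
         T = convex hull (A ` {..<3}) \<and> \<not> collinear (A ` {..<3})
       else (\<exists>a h. h > 0 \<and> T = cbox a (a + vector [h, h]) \<and>
              A ` {..<4} =
                (if K = BilinSq then
                   {a, a + vector [h, 0], a + vector [h, h], a + vector [0, h]}
                 else
                   {a + vector [h/2, 0], a + vector [h, h/2],
                    a + vector [h/2, h], a + vector [0, h/2]}))))"

definition pd :: "2 \<Rightarrow> (real^2 \<Rightarrow> 'a::real_normed_vector) \<Rightarrow> real^2 \<Rightarrow> 'a" where
  "pd j f X = vector_derivative (\<lambda>t. f (X + t *\<^sub>R axis j 1)) (at 0)"

definition jac :: "(real^2 \<Rightarrow> real^2) \<Rightarrow> real^2 \<Rightarrow> real^2^2" where
  "jac v X = (\<chi> a b. (pd b v X) $ a)"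

definition stress :: "real \<Rightarrow> real \<Rightarrow> (real^2 \<Rightarrow> real^2) \<Rightarrow> real^2 \<Rightarrow> real^2^2" where
  "stress lam mu v X =
     (lam * ((jac v X)$1$1 + (jac v X)$2$2)) *\<^sub>R mat 1
     + mu *\<^sub>R (jac v X + transpose (jac v X))"

definition on_l :: "real^2 \<Rightarrow> real^2 \<Rightarrow> real^2 \<Rightarrow> bool" where
  "on_l D nbar X = ((X - D) \<bullet> nbar = 0)"

(* Lame parameters selected by the sign s (True = +, False = -) *)
definition lame :: "bool \<Rightarrow> real \<Rightarrow> real \<Rightarrow> real" where
  "lame s ap am = (if s then ap else am)"

(* IFE function: pair (v^+, v^-) of functions in Pi_T *)
definition is_ife :: "elem_kind \<Rightarrow> (real^2) set \<Rightarrow> real^2 \<Rightarrow> real^2 \<Rightarrow> real^2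
    \<Rightarrow> real \<Rightarrow> real \<Rightarrow> real \<Rightarrow> real
    \<Rightarrow> (real^2 \<Rightarrow> real^2) \<times> (real^2 \<Rightarrow> real^2) \<Rightarrow> bool" where
  "is_ife K T D nbar F lp mp lm mm v =
     ((\<exists>cp cm. fst v = polyv K cp \<and> snd v = polyv K cm \<and> (K \<noteq> Tri \<longrightarrow> cp 3 = cm 3))
      \<and> (\<forall>Y\<in>T. on_l D nbar Y \<longrightarrow> fst v Y = snd v Y)
      \<and> stress lp mp (fst v) F *v nbar = stress lm mm (snd v) F *v nbar)"

(* T^+ = {X in T. (X - D).nbar >= 0}, T^- = {X in T. (X - D).nbar <= 0};
   value of the piecewise IFE function at a node *)
definition nodal_val :: "real^2 \<Rightarrow> real^2
    \<Rightarrow> (real^2 \<Rightarrow> real^2) \<times> (real^2 \<Rightarrow> real^2) \<Rightarrow> real^2 \<Rightarrow> real^2" where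
  "nodal_val D nbar v P = (if (P - D) \<bullet> nbar \<ge> 0 then fst v P else snd v P)"

definition unisolvent :: "elem_kind \<Rightarrow> (real^2) set \<Rightarrow> (nat \<Rightarrow> real^2) \<Rightarrow> real^2 \<Rightarrow> real^2
    \<Rightarrow> real^2 \<Rightarrow> real \<Rightarrow> real \<Rightarrow> real \<Rightarrow> real \<Rightarrow> bool" where
  "unisolvent K T A D nbar F lp mp lm mm =
     (\<forall>w :: nat \<Rightarrow> real^2. \<exists>!v. is_ife K T D nbar F lp mp lm mm v \<and>
         (\<forall>i<nnodes K. nodal_val D nbar v (A i) = w i))"

(* shape function phi_{k,T}, 0 <= k < 2|I| (0-based) *)
definition shape :: "elem_kind \<Rightarrow> (real^2) set \<Rightarrow> (nat \<Rightarrow> real^2) \<Rightarrow> real^2 \<Rightarrow> real^2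
    \<Rightarrow> real^2 \<Rightarrow> real \<Rightarrow> real \<Rightarrow> real \<Rightarrow> real \<Rightarrow> nat
    \<Rightarrow> (real^2 \<Rightarrow> real^2) \<times> (real^2 \<Rightarrow> real^2)" where
  "shape K T A D nbar F lp mp lm mm k =
     (THE v. is_ife K T D nbar F lp mp lm mm v \<and>
        (\<forall>j<nnodes K. nodal_val D nbar v (A j) =
            (if k < nnodes K then vector [if j = k then 1 else 0, 0]
             else vector [0, if j + nnodes K = k then 1 else 0])))"

(* Phi^s_i(Y) = [phi_i^s(Y), phi_{i+|I|}^s(Y)] as a 2x2 matrix (columns) *)
definition PhiS :: "elem_kind \<Rightarrow> (real^2) set \<Rightarrow> (nat \<Rightarrow> real^2) \<Rightarrow> real^2 \<Rightarrow> real^2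
    \<Rightarrow> real^2 \<Rightarrow> real \<Rightarrow> real \<Rightarrow> real \<Rightarrow> real \<Rightarrow> bool \<Rightarrow> nat \<Rightarrow> real^2 \<Rightarrow> real^2^2" where
  "PhiS K T A D nbar F lp mp lm mm s i Y =
     (let sel = (\<lambda>v. if s then fst v Y else snd v Y);
          c1 = sel (shape K T A D nbar F lp mp lm mm i);
          c2 = sel (shape K T A D nbar F lp mp lm mm (i + nnodes K))
      in transpose (vector [c1, c2]))"

definition Iside :: "elem_kind \<Rightarrow> (nat \<Rightarrow> real^2) \<Rightarrow> real^2 \<Rightarrow> real^2 \<Rightarrow> bool \<Rightarrow> nat set" where
  "Iside K A D nbar s =
     {i. i < nnodes K \<and> (if s then (A i - D) \<bullet> nbar > 0 else (A i - D) \<bullet> nbar < 0)}"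

definition Nbar :: "real \<Rightarrow> real \<Rightarrow> real^2 \<Rightarrow> real^4^4" where
  "Nbar lam mu n = vector [
     vector [(lam + 2*mu) * n$1, mu * n$2, mu * n$2, lam * n$1],
     vector [lam * n$2, mu * n$1, mu * n$1, (lam + 2*mu) * n$2],
     vector [- n$2, 0, n$1, 0],
     vector [0, - n$2, 0, n$1]]"

definition Mbar :: "bool \<Rightarrow> real \<Rightarrow> real \<Rightarrow> real \<Rightarrow> real \<Rightarrow> real^2 \<Rightarrow> real^4^4" where
  "Mbar s lp mp lm mm n =
     matrix_inv (Nbar (lame (\<not> s) lp lm) (lame (\<not> s) mp mm) n)
       ** Nbar (lame s lp lm) (lame s mp mm) n"

(* Kronecker product v^T \<otimes> B of a 1x2 row vector and a 2x2 matrix: [v1 B, v2 B] *)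
definition kron_row :: "real^2 \<Rightarrow> real^2^2 \<Rightarrow> real^4^2" where
  "kron_row v B = vector [
     vector [v$1 * B$1$1, v$1 * B$1$2, v$2 * B$1$1, v$2 * B$1$2],
     vector [v$1 * B$2$1, v$1 * B$2$2, v$2 * B$2$1, v$2 * B$2$2]]"

definition Iblock :: "2 \<Rightarrow> real^4^2" where
  "Iblock j = (if j = 1 then vector [vector [1, 0, 0, 0], vector [0, 1, 0, 0]]
               else vector [vector [0, 0, 1, 0], vector [0, 0, 0, 1]])"

end

theory Submission
  imports Defs
begin

lemma vector_4 [simp]:
 "(vector [a,b,c,d] ::('a::zero)^4)$1 = a"
 "(vector [a,b,c,d] ::('a::zero)^4)$2 = b"
 "(vector [a,b,c,d] ::('a::zero)^4)$3 = c"
 "(vector [a,b,c,d] ::('a::zero)^4)$4 = d"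
  unfolding vector_def by simp_all

lemma pd_has_derivative:
  assumes "(f has_derivative f') (at X)"
  shows "pd j f X = f' (axis j 1)"
proof -
  have bl: "bounded_linear f'" using assms has_derivative_bounded_linear by blast
  have g: "((\<lambda>t::real. X + t *\<^sub>R axis j 1) has_derivative (\<lambda>t. t *\<^sub>R axis j 1)) (at 0)"
    by (auto intro!: derivative_eq_intros)
  have f0: "(f has_derivative f') (at (X + (0::real) *\<^sub>R axis j 1))" using assms by simp
  have "((f \<circ> (\<lambda>t::real. X + t *\<^sub>R axis j 1)) has_derivative (f' \<circ> (\<lambda>t. t *\<^sub>R axis j 1))) (at 0)"
    by (rule diff_chain_at[OF g f0])
  moreover have "(f' \<circ> (\<lambda>t. t *\<^sub>R axis j 1)) = (\<lambda>t. t *\<^sub>R f' (axis j 1))"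
    using bl by (auto simp: linear_scale[OF bounded_linear.linear[OF bl]])
  ultimately have "((\<lambda>t. f (X + t *\<^sub>R axis j 1)) has_vector_derivative f' (axis j 1)) (at 0)"
    by (simp add: has_vector_derivative_def o_def)
  then show ?thesis unfolding pd_def by (rule vector_derivative_at)
qed

lemma pd_lin:
  assumes "f differentiable (at X)" "bounded_linear L"
  shows "pd j (\<lambda>Y. L (f Y)) X = L (pd j f X)"
proof -
  obtain f' where f': "(f has_derivative f') (at X)" using assms(1) differentiable_def by blast
  have "((\<lambda>Y. L (f Y)) has_derivative (\<lambda>h. L (f' h))) (at X)"
    using bounded_linear.has_derivative[OF assms(2) f'] .
  then show ?thesis using pd_has_derivative f' by metis
qed

lemma pd_add:
  assumes "f differentiable (at X)" "g differentiable (at X)"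
  shows "pd j (\<lambda>Y. f Y + g Y) X = pd j f X + pd j g X"
proof -
  obtain f' where f': "(f has_derivative f') (at X)" using assms(1) differentiable_def by blast
  obtain g' where g': "(g has_derivative g') (at X)" using assms(2) differentiable_def by blast
  have "((\<lambda>Y. f Y + g Y) has_derivative (\<lambda>h. f' h + g' h)) (at X)"
    using has_derivative_add[OF f' g'] .
  then show ?thesis using pd_has_derivative f' g' by metis
qed

lemma pd_sum:
  assumes "finite S" "\<And>i. i \<in> S \<Longrightarrow> f i differentiable (at X)"
  shows "pd j (\<lambda>Y. \<Sum>i\<in>S. f i Y) X = (\<Sum>i\<in>S. pd j (f i) X)"
  using assms
proof (induction S rule: finite_induct)
  case empty
  have "((\<lambda>Y. 0::'b) has_derivative (\<lambda>h. 0)) (at X)" by simp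
  then show ?case using pd_has_derivative by fastforce
next
  case (insert x F)
  have d: "(\<lambda>Y. \<Sum>i\<in>F. f i Y) differentiable (at X)"
    using insert by (auto intro!: differentiable_sum)
  have "pd j (\<lambda>Y. \<Sum>i\<in>insert x F. f i Y) X = pd j (\<lambda>Y. f x Y + (\<Sum>i\<in>F. f i Y)) X"
    using insert by simp
  also have "\<dots> = pd j (f x) X + pd j (\<lambda>Y. \<Sum>i\<in>F. f i Y) X"
    by (rule pd_add) (use insert d in auto)
  finally show ?case using insert by simp
qed

definition quad :: "(real^2 \<Rightarrow> 'a::real_normed_vector) \<Rightarrow> bool" where
  "quad f \<longleftrightarrow> (\<exists>c0 c1 c2 c3 c4 c5. \<forall>Y. f Y = c0 + Y$1 *\<^sub>R c1 + Y$2 *\<^sub>R c2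
      + (Y$1*Y$1) *\<^sub>R c3 + (Y$1*Y$2) *\<^sub>R c4 + (Y$2*Y$2) *\<^sub>R c5)"

lemma has_derivative_vec_nth' [derivative_intros]:
  "((\<lambda>x. x $ i) has_derivative (\<lambda>h. h $ i)) F"
  by (rule bounded_linear_imp_has_derivative[OF bounded_linear_vec_nth])

lemma quad_der:
  fixes X :: "real^2"
  assumes "\<forall>Y. f Y = c0 + Y$1 *\<^sub>R c1 + Y$2 *\<^sub>R c2
      + (Y$1*Y$1) *\<^sub>R c3 + (Y$1*Y$2) *\<^sub>R c4 + (Y$2*Y$2) *\<^sub>R c5"
  shows "(f has_derivative (\<lambda>h. h$1 *\<^sub>R c1 + h$2 *\<^sub>R c2 + (2*X$1*h$1) *\<^sub>R c3
      + (h$1*X$2 + X$1*h$2) *\<^sub>R c4 + (2*X$2*h$2) *\<^sub>R c5)) (at X)"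
proof -
  have e: "f = (\<lambda>Y. c0 + Y$1 *\<^sub>R c1 + Y$2 *\<^sub>R c2
      + (Y$1*Y$1) *\<^sub>R c3 + (Y$1*Y$2) *\<^sub>R c4 + (Y$2*Y$2) *\<^sub>R c5)" using assms by auto
  show ?thesis unfolding e
    by (auto intro!: derivative_eq_intros ext simp: algebra_simps)
qed

lemma quad_diff: "quad f \<Longrightarrow> f differentiable (at X)"
  unfolding quad_def differentiable_def using quad_der by blast

lemma quad_pd: assumes "quad f" shows "quad (pd j f)"
proof -
  obtain c0 c1 c2 c3 c4 c5 where c: "\<forall>Y. f Y = c0 + Y$1 *\<^sub>R c1 + Y$2 *\<^sub>R c2
      + (Y$1*Y$1) *\<^sub>R c3 + (Y$1*Y$2) *\<^sub>R c4 + (Y$2*Y$2) *\<^sub>R c5"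
    using assms unfolding quad_def by blast
  define a where "a = (axis j 1 :: real^2)"
  have "\<forall>X. pd j f X = (a$1 *\<^sub>R c1 + a$2 *\<^sub>R c2) + X$1 *\<^sub>R ((2*a$1) *\<^sub>R c3 + a$2 *\<^sub>R c4)
     + X$2 *\<^sub>R (a$1 *\<^sub>R c4 + (2*a$2) *\<^sub>R c5) + (X$1*X$1) *\<^sub>R 0 + (X$1*X$2) *\<^sub>R 0 + (X$2*X$2) *\<^sub>R 0"
  proof
    fix X
    show "pd j f X = (a$1 *\<^sub>R c1 + a$2 *\<^sub>R c2) + X$1 *\<^sub>R ((2*a$1) *\<^sub>R c3 + a$2 *\<^sub>R c4)
     + X$2 *\<^sub>R (a$1 *\<^sub>R c4 + (2*a$2) *\<^sub>R c5) + (X$1*X$1) *\<^sub>R 0 + (X$1*X$2) *\<^sub>R 0 + (X$2*X$2) *\<^sub>R 0"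
      unfolding pd_has_derivative[OF quad_der[OF c, of X]] a_def
      by (simp add: algebra_simps scaleR_add_right)
  qed
  then show ?thesis unfolding quad_def by blast
qed

lemma quad_lin: assumes "bounded_linear L" "quad f" shows "quad (\<lambda>Y. L (f Y))"
proof -
  obtain c0 c1 c2 c3 c4 c5 where c: "\<forall>Y. f Y = c0 + Y$1 *\<^sub>R c1 + Y$2 *\<^sub>R c2
      + (Y$1*Y$1) *\<^sub>R c3 + (Y$1*Y$2) *\<^sub>R c4 + (Y$2*Y$2) *\<^sub>R c5"
    using assms unfolding quad_def by blast
  have l: "linear L" using assms(1) bounded_linear.linear by blast
  have "\<forall>Y. L (f Y) = L c0 + Y$1 *\<^sub>R L c1 + Y$2 *\<^sub>R L c2
      + (Y$1*Y$1) *\<^sub>R L c3 + (Y$1*Y$2) *\<^sub>R L c4 + (Y$2*Y$2) *\<^sub>R L c5"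
    using c by (simp add: linear_add[OF l] linear_scale[OF l])
  then show ?thesis unfolding quad_def by blast
qed

lemma quad_add: assumes "quad f" "quad g" shows "quad (\<lambda>Y. f Y + g Y)"
proof -
  obtain c0 c1 c2 c3 c4 c5 where c: "\<forall>Y. f Y = c0 + Y$1 *\<^sub>R c1 + Y$2 *\<^sub>R c2
      + (Y$1*Y$1) *\<^sub>R c3 + (Y$1*Y$2) *\<^sub>R c4 + (Y$2*Y$2) *\<^sub>R c5"
    using assms unfolding quad_def by blast
  obtain d0 d1 d2 d3 d4 d5 where d: "\<forall>Y. g Y = d0 + Y$1 *\<^sub>R d1 + Y$2 *\<^sub>R d2
      + (Y$1*Y$1) *\<^sub>R d3 + (Y$1*Y$2) *\<^sub>R d4 + (Y$2*Y$2) *\<^sub>R d5"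
    using assms unfolding quad_def by blast
  have "\<forall>Y. f Y + g Y = (c0+d0) + Y$1 *\<^sub>R (c1+d1) + Y$2 *\<^sub>R (c2+d2)
      + (Y$1*Y$1) *\<^sub>R (c3+d3) + (Y$1*Y$2) *\<^sub>R (c4+d4) + (Y$2*Y$2) *\<^sub>R (c5+d5)"
    using c d by (simp add: algebra_simps)
  then show ?thesis unfolding quad_def by blast
qed

lemma quad_const: "quad (\<lambda>Y. c)"
  unfolding quad_def by (rule exI[of _ c], intro exI[of _ 0]) simp

lemma quad_sum: "finite S \<Longrightarrow> (\<And>i. i \<in> S \<Longrightarrow> quad (f i)) \<Longrightarrow> quad (\<lambda>Y. \<Sum>i\<in>S. f i Y)"
  by (induction S rule: finite_induct) (auto intro: quad_add quad_const)

lemma quad_scal: assumes "quad (p :: real^2 \<Rightarrow> real)" shows "quad (\<lambda>Y. p Y *\<^sub>R v)"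
  using quad_lin[OF bounded_linear_scaleR_left assms] .

lemma quad_pbasis: "quad (pbasis K k)"
proof -
  consider "k=0" | "k=1" | "k=2" | "k\<noteq>0 \<and> k\<noteq>1 \<and> k\<noteq>2 \<and> K=BilinSq" | "k\<noteq>0\<and>k\<noteq>1\<and>k\<noteq>2\<and>K\<noteq>BilinSq" by blast
  then show ?thesis
  proof cases
    case 1 then show ?thesis unfolding quad_def
      by (rule_tac x=1 in exI, rule_tac x=0 in exI, rule_tac x=0 in exI, rule_tac x=0 in exI,
          rule_tac x=0 in exI, rule_tac x=0 in exI) (simp add: pbasis_def)
  next
    case 2 then show ?thesis unfolding quad_def
      by (rule_tac x=0 in exI, rule_tac x=1 in exI, rule_tac x=0 in exI, rule_tac x=0 in exI,
          rule_tac x=0 in exI, rule_tac x=0 in exI) (simp add: pbasis_def)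
  next
    case 3 then show ?thesis unfolding quad_def
      by (rule_tac x=0 in exI, rule_tac x=0 in exI, rule_tac x=1 in exI, rule_tac x=0 in exI,
          rule_tac x=0 in exI, rule_tac x=0 in exI) (simp add: pbasis_def)
  next
    case 4 then show ?thesis unfolding quad_def
      by (rule_tac x=0 in exI, rule_tac x=0 in exI, rule_tac x=0 in exI, rule_tac x=0 in exI,
          rule_tac x=1 in exI, rule_tac x=0 in exI) (simp add: pbasis_def)
  next
    case 5 then show ?thesis unfolding quad_def
      by (rule_tac x=0 in exI, rule_tac x=0 in exI, rule_tac x=0 in exI, rule_tac x=1 in exI,
          rule_tac x=0 in exI, rule_tac x="-1" in exI) (simp add: pbasis_def power2_eq_square)
  qed
qed

lemma quad_polyv: "quad (polyv K c)"
  unfolding polyv_def[abs_def]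
  by (rule quad_sum) (auto intro: quad_scal quad_pbasis)

lemma quad_tv: assumes "quad p" "quad q"
  shows "quad (\<lambda>Y. transpose (vector [p Y, q Y]) :: real^2^2)"
proof -
  obtain c0 c1 c2 c3 c4 c5 where c: "\<forall>Y. p Y = c0 + Y$1 *\<^sub>R c1 + Y$2 *\<^sub>R c2
      + (Y$1*Y$1) *\<^sub>R c3 + (Y$1*Y$2) *\<^sub>R c4 + (Y$2*Y$2) *\<^sub>R c5"
    using assms unfolding quad_def by blast
  obtain d0 d1 d2 d3 d4 d5 where d: "\<forall>Y. q Y = d0 + Y$1 *\<^sub>R d1 + Y$2 *\<^sub>R d2
      + (Y$1*Y$1) *\<^sub>R d3 + (Y$1*Y$2) *\<^sub>R d4 + (Y$2*Y$2) *\<^sub>R d5"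
    using assms unfolding quad_def by blast
  let ?t = "\<lambda>a b. transpose (vector [a, b]) :: real^2^2"
  have "\<forall>Y. ?t (p Y) (q Y) = ?t c0 d0 + Y$1 *\<^sub>R ?t c1 d1 + Y$2 *\<^sub>R ?t c2 d2
      + (Y$1*Y$1) *\<^sub>R ?t c3 d3 + (Y$1*Y$2) *\<^sub>R ?t c4 d4 + (Y$2*Y$2) *\<^sub>R ?t c5 d5"
    using c d by (simp add: vec_eq_iff forall_2 transpose_def)
  then show ?thesis unfolding quad_def by blast
qed

lemma linear_kron: "linear (\<lambda>B. kron_row v B)"
  by (rule linearI) (simp_all add: kron_row_def vec_eq_iff forall_2 forall_4 algebra_simps)

lemma bl_kron: "bounded_linear (\<lambda>B. kron_row v B)"
  using linear_kron linear_conv_bounded_linear by blast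

lemma linear_rmul: "linear (\<lambda>B::real^'n^'m. B ** (C::real^'p^'n))"
  by (rule linearI) (simp_all add: matrix_matrix_mult_def vec_eq_iff sum.distrib algebra_simps sum_distrib_left)

lemma bl_kron_rmul: "bounded_linear (\<lambda>B. kron_row v B ** (C::real^4^4))"
proof -
  have "linear (\<lambda>B. kron_row v B ** C)"
    using linear_compose[OF linear_kron[of v] linear_rmul[of C]] by (simp add: o_def)
  then show ?thesis using linear_conv_bounded_linear by blast
qed

definition lc :: "real^2^2 \<Rightarrow> real^2 \<Rightarrow> nat \<Rightarrow> real^2" where
  "lc G b k = (if k = 0 then b else if k = 1 then (\<chi> a. G$a$1) else if k = 2 then (\<chi> a. G$a$2) else 0)"

lemma lessThan_3: "{..<3::nat} = {0,1,2}" by auto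
lemma lessThan_4: "{..<4::nat} = {0,1,2,3}" by auto

lemma lin_polyv: "(\<lambda>Y. G *v Y + b) = polyv K (lc G b)"
  by (rule ext) (auto simp: polyv_def nnodes_def lessThan_3 lessThan_4 lc_def pbasis_def
      vec_eq_iff forall_2 matrix_vector_mult_def sum_2 algebra_simps)

lemma jac_lin: "jac (\<lambda>Y. G *v Y + b) X = G"
proof -
  have d: "((\<lambda>Y. G *v Y + b) has_derivative (\<lambda>h. G *v h)) (at X)"
    by (auto intro!: derivative_eq_intros bounded_linear_imp_has_derivative)
  show ?thesis unfolding jac_def pd_has_derivative[OF d]
    by (auto simp: vec_eq_iff matrix_vector_mult_def sum_2 axis_def forall_2)
qed

definition vecG :: "real^2^2 \<Rightarrow> real^4" where
  "vecG G = vector [G$1$1, G$2$1, G$1$2, G$2$2]"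

definition unvec :: "real^4 \<Rightarrow> real^2^2" where
  "unvec w = vector [vector [w$1, w$3], vector [w$2, w$4]]"

lemma vecG_unvec [simp]: "vecG (unvec w) = w"
  by (simp add: vecG_def unvec_def vec_eq_iff forall_4)

lemma unvec_add: "unvec (a + b) = unvec a + unvec b"
  by (simp add: unvec_def vec_eq_iff forall_2)

lemma unvec_diff: "unvec (a - b) = unvec a - unvec b"
  by (simp add: unvec_def vec_eq_iff forall_2)

lemma Nbar_rows:
  "(Nbar lam mu n *v x)$1 = (lam + 2*mu) * n$1 * x$1 + mu * n$2 * x$2 + mu * n$2 * x$3 + lam * n$1 * x$4"
  "(Nbar lam mu n *v x)$2 = lam * n$2 * x$1 + mu * n$1 * x$2 + mu * n$1 * x$3 + (lam + 2*mu) * n$2 * x$4"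
  "(Nbar lam mu n *v x)$3 = - n$2 * x$1 + n$1 * x$3"
  "(Nbar lam mu n *v x)$4 = - n$2 * x$2 + n$1 * x$4"
  by (simp_all add: Nbar_def matrix_vector_mult_def sum_4)

lemma stress_lin:
  assumes "jac f X = G"
  shows "(stress lam mu f X *v n)$1 = (Nbar lam mu n *v vecG G)$1"
        "(stress lam mu f X *v n)$2 = (Nbar lam mu n *v vecG G)$2"
  unfolding Nbar_rows using assms
  by (simp_all add: stress_def vecG_def matrix_vector_mult_def sum_2 transpose_def mat_def
      algebra_simps)

lemma Nbar_inv:
  assumes "lam > 0" "mu > 0" "n$1 * n$1 + n$2 * n$2 = 1"
  shows "invertible (Nbar lam mu n)"
  unfolding invertible_left_inverse matrix_left_invertible_ker
proof (intro allI impI)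
  fix x :: "real^4" assume h: "Nbar lam mu n *v x = 0"
  have e1: "(lam + 2*mu) * n$1 * x$1 + mu * n$2 * x$2 + mu * n$2 * x$3 + lam * n$1 * x$4 = 0"
    using h Nbar_rows(1)[of lam mu n x] by simp
  have e2: "lam * n$2 * x$1 + mu * n$1 * x$2 + mu * n$1 * x$3 + (lam + 2*mu) * n$2 * x$4 = 0"
    using h Nbar_rows(2)[of lam mu n x] by simp
  have e3: "- n$2 * x$1 + n$1 * x$3 = 0" using h Nbar_rows(3)[of lam mu n x] by simp
  have e4: "- n$2 * x$2 + n$1 * x$4 = 0" using h Nbar_rows(4)[of lam mu n x] by simp
  define a1 where "a1 = n$1 * x$1 + n$2 * x$3"
  define a2 where "a2 = n$1 * x$2 + n$2 * x$4"
  have x1: "x$1 = a1 * n$1"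
  proof -
    have "x$1 = x$1 * (n$1 * n$1 + n$2 * n$2)" using assms(3) by simp
    also have "\<dots> = a1 * n$1" unfolding a1_def using e3 by (simp add: algebra_simps)
    finally show ?thesis .
  qed
  have x3: "x$3 = a1 * n$2"
  proof -
    have "x$3 = x$3 * (n$1 * n$1 + n$2 * n$2)" using assms(3) by simp
    also have "\<dots> = a1 * n$2" unfolding a1_def using e3 by (simp add: algebra_simps)
    finally show ?thesis .
  qed
  have x2: "x$2 = a2 * n$1"
  proof -
    have "x$2 = x$2 * (n$1 * n$1 + n$2 * n$2)" using assms(3) by simp
    also have "\<dots> = a2 * n$1" unfolding a2_def using e4 by (simp add: algebra_simps)
    finally show ?thesis .
  qed
  have x4: "x$4 = a2 * n$2"
  proof -
    have "x$4 = x$4 * (n$1 * n$1 + n$2 * n$2)" using assms(3) by simp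
    also have "\<dots> = a2 * n$2" unfolding a2_def using e4 by (simp add: algebra_simps)
    finally show ?thesis .
  qed
  define p where "p = a1 * n$1 + a2 * n$2"
  have f1: "mu * a1 + (lam + mu) * p * n$1 = 0"
  proof -
    have "mu * a1 + (lam + mu) * p * n$1 = mu * a1 * (n$1 * n$1 + n$2 * n$2) + (lam + mu) * p * n$1"
      using assms(3) by simp
    also have "\<dots> = 0" using e1 unfolding x1 x2 x3 x4 p_def by (simp add: algebra_simps)
    finally show ?thesis .
  qed
  have f2: "mu * a2 + (lam + mu) * p * n$2 = 0"
  proof -
    have "mu * a2 + (lam + mu) * p * n$2 = mu * a2 * (n$1 * n$1 + n$2 * n$2) + (lam + mu) * p * n$2"
      using assms(3) by simp
    also have "\<dots> = 0" using e2 unfolding x1 x2 x3 x4 p_def by (simp add: algebra_simps)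
    finally show ?thesis .
  qed
  have "n$1 * (mu * a1 + (lam + mu) * p * n$1) + n$2 * (mu * a2 + (lam + mu) * p * n$2)
     = mu * p + (lam + mu) * p * (n$1 * n$1 + n$2 * n$2)"
    unfolding p_def by (simp add: algebra_simps)
  then have "(lam + 2 * mu) * p = n$1 * (mu * a1 + (lam + mu) * p * n$1) + n$2 * (mu * a2 + (lam + mu) * p * n$2)"
    using assms(3) by (simp add: algebra_simps)
  then have "(lam + 2 * mu) * p = 0" using f1 f2 by simp
  then have "p = 0" using assms by simp
  then have "a1 = 0" "a2 = 0" using f1 f2 assms by auto
  then show "x = 0" using x1 x2 x3 x4 by (simp add: vec_eq_iff forall_4)
qed

lemma matrix_inv_right': "invertible A \<Longrightarrow> A ** matrix_inv A = mat 1"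
  unfolding invertible_def matrix_inv_def by (rule someI_ex[THEN conjunct1])

lemma sum_mv: "(\<Sum>i\<in>S. f i) *v (w::real^'n) = (\<Sum>i\<in>S. f i *v w)"
  by (induction S rule: infinite_finite_induct) (simp_all add: matrix_vector_mult_add_rdistrib)

lemma kron_mv: "kron_row v B *v w = B *v (unvec w *v v)"
  by (simp add: vec_eq_iff forall_2 matrix_vector_mult_def sum_2 sum_4 kron_row_def unvec_def algebra_simps)

lemma kron_id_mv: "kron_row v (mat 1) *v w = unvec w *v v"
  by (simp add: kron_mv)

lemma phi_mv: "transpose (vector [c1, c2] :: real^2^2) *v w = w$1 *\<^sub>R c1 + w$2 *\<^sub>R c2"
  by (simp add: vec_eq_iff forall_2 matrix_vector_mult_def sum_2 transpose_def algebra_simps)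

lemma tang_scalar:
  fixes n1 n2 d1 d2 u1 u2 :: real
  assumes "-n2*d1 + n1*d2 = 0" "u1*n1 + u2*n2 = 0" "n1*n1+n2*n2 = 1"
  shows "d1*u1 + d2*u2 = 0"
proof -
  let ?x = "d1*u1 + d2*u2"
  have a: "?x * n1 = d1 * (u1*n1 + u2*n2)"
  proof -
    have "?x * n1 = d1*u1*n1 + u2*(d2*n1)" by (simp add: algebra_simps)
    also have "d2*n1 = d1*n2" using assms(1) by (simp add: algebra_simps)
    finally show ?thesis by (simp add: algebra_simps)
  qed
  have b: "?x * n2 = d2 * (u1*n1 + u2*n2)"
  proof -
    have "?x * n2 = u1*(d1*n2) + d2*u2*n2" by (simp add: algebra_simps)
    also have "d1*n2 = d2*n1" using assms(1) by (simp add: algebra_simps)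
    finally show ?thesis by (simp add: algebra_simps)
  qed
  have "?x = (?x * n1) * n1 + (?x * n2) * n2"
  proof -
    have "(?x * n1) * n1 + (?x * n2) * n2 = ?x * (n1*n1+n2*n2)" by (simp add: algebra_simps)
    then show ?thesis using assms(3) by simp
  qed
  then show ?thesis unfolding a b assms(2) by simp
qed

lemma polyv_comb: "polyv K (\<lambda>k. a *\<^sub>R c1 k + b *\<^sub>R c2 k + c3 k) Y
   = a *\<^sub>R polyv K c1 Y + b *\<^sub>R polyv K c2 Y + polyv K c3 Y"
  by (simp add: polyv_def scaleR_add_right sum.distrib scaleR_sum_right mult.commute)

lemma stress_comb:
  fixes f1 f2 f3 :: "real^2 \<Rightarrow> real^2"
  assumes "f1 differentiable (at F)" "f2 differentiable (at F)" "f3 differentiable (at F)"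
  shows "stress lam mu (\<lambda>Y. a *\<^sub>R f1 Y + b *\<^sub>R f2 Y + f3 Y) F *v n
     = a *\<^sub>R (stress lam mu f1 F *v n) + b *\<^sub>R (stress lam mu f2 F *v n) + stress lam mu f3 F *v n"
proof -
  have d1: "(\<lambda>Y. a *\<^sub>R f1 Y) differentiable (at F)" using assms by (auto intro!: differentiable_scaleR differentiable_add differentiable_const)
  have d2: "(\<lambda>Y. b *\<^sub>R f2 Y) differentiable (at F)" using assms by (auto intro!: differentiable_scaleR differentiable_add differentiable_const)
  have d12: "(\<lambda>Y. a *\<^sub>R f1 Y + b *\<^sub>R f2 Y) differentiable (at F)" using d1 d2 by (auto intro!: differentiable_scaleR differentiable_add differentiable_const)
  have p: "pd j (\<lambda>Y. a *\<^sub>R f1 Y + b *\<^sub>R f2 Y + f3 Y) F = a *\<^sub>R pd j f1 F + b *\<^sub>R pd j f2 F + pd j f3 F" for j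
    using pd_add[OF d12 assms(3)] pd_add[OF d1 d2] pd_lin[OF assms(1) bounded_linear_scaleR_right]
      pd_lin[OF assms(2) bounded_linear_scaleR_right] by simp
  show ?thesis
    unfolding stress_def jac_def p by (simp add: vec_eq_iff forall_2 matrix_vector_mult_def sum_2 transpose_def mat_def algebra_simps)
qed

lemma is_ife_comb:
  assumes "is_ife K T D n F lp mp lm mm v1" "is_ife K T D n F lp mp lm mm v2" "is_ife K T D n F lp mp lm mm v3"
  shows "is_ife K T D n F lp mp lm mm ((\<lambda>Y. a *\<^sub>R fst v1 Y + b *\<^sub>R fst v2 Y + fst v3 Y),
                                       (\<lambda>Y. a *\<^sub>R snd v1 Y + b *\<^sub>R snd v2 Y + snd v3 Y))"
proof -
  obtain p1 m1 where 1: "fst v1 = polyv K p1" "snd v1 = polyv K m1" "K \<noteq> Tri \<longrightarrow> p1 3 = m1 3"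
    using assms(1) unfolding is_ife_def by blast
  obtain p2 m2 where 2: "fst v2 = polyv K p2" "snd v2 = polyv K m2" "K \<noteq> Tri \<longrightarrow> p2 3 = m2 3"
    using assms(2) unfolding is_ife_def by blast
  obtain p3 m3 where 3: "fst v3 = polyv K p3" "snd v3 = polyv K m3" "K \<noteq> Tri \<longrightarrow> p3 3 = m3 3"
    using assms(3) unfolding is_ife_def by blast
  have P: "(\<lambda>Y. a *\<^sub>R fst v1 Y + b *\<^sub>R fst v2 Y + fst v3 Y) = polyv K (\<lambda>k. a *\<^sub>R p1 k + b *\<^sub>R p2 k + p3 k)"
    by (rule ext) (simp add: polyv_comb 1 2 3)
  have M: "(\<lambda>Y. a *\<^sub>R snd v1 Y + b *\<^sub>R snd v2 Y + snd v3 Y) = polyv K (\<lambda>k. a *\<^sub>R m1 k + b *\<^sub>R m2 k + m3 k)"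
    by (rule ext) (simp add: polyv_comb 1 2 3)
  have c: "\<forall>Y\<in>T. on_l D n Y \<longrightarrow> a *\<^sub>R fst v1 Y + b *\<^sub>R fst v2 Y + fst v3 Y = a *\<^sub>R snd v1 Y + b *\<^sub>R snd v2 Y + snd v3 Y"
    using assms unfolding is_ife_def by simp
  have st: "stress lp mp (fst vi) F *v n = stress lm mm (snd vi) F *v n" if "is_ife K T D n F lp mp lm mm vi" for vi
    using that unfolding is_ife_def by blast
  have df: "fst vi differentiable (at F)" "snd vi differentiable (at F)" if h: "is_ife K T D n F lp mp lm mm vi" for vi
  proof -
    obtain cp cm where "fst vi = polyv K cp" "snd vi = polyv K cm" using h unfolding is_ife_def by blast
    then show "fst vi differentiable (at F)" "snd vi differentiable (at F)" using quad_diff quad_polyv by metis+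
  qed
  have s: "stress lp mp (\<lambda>Y. a *\<^sub>R fst v1 Y + b *\<^sub>R fst v2 Y + fst v3 Y) F *v n
        = stress lm mm (\<lambda>Y. a *\<^sub>R snd v1 Y + b *\<^sub>R snd v2 Y + snd v3 Y) F *v n"
    using stress_comb[OF df(1)[OF assms(1)] df(1)[OF assms(2)] df(1)[OF assms(3)]]
      stress_comb[OF df(2)[OF assms(1)] df(2)[OF assms(2)] df(2)[OF assms(3)]]
      st[OF assms(1)] st[OF assms(2)] st[OF assms(3)] by simp
  have ex: "\<exists>cp cm. (\<lambda>Y. a *\<^sub>R fst v1 Y + b *\<^sub>R fst v2 Y + fst v3 Y) = polyv K cp \<and>
      (\<lambda>Y. a *\<^sub>R snd v1 Y + b *\<^sub>R snd v2 Y + snd v3 Y) = polyv K cm \<and> (K \<noteq> Tri \<longrightarrow> cp 3 = cm 3)"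
    by (rule exI[of _ "\<lambda>k. a *\<^sub>R p1 k + b *\<^sub>R p2 k + p3 k"], rule exI[of _ "\<lambda>k. a *\<^sub>R m1 k + b *\<^sub>R m2 k + m3 k"])
      (intro conjI P M impI, use 1(3) 2(3) 3(3) in simp)
  show ?thesis unfolding is_ife_def fst_conv snd_conv
    using ex c s by blast
qed

lemma is_ife_lin:
  assumes "\<forall>Y\<in>T. on_l D n Y \<longrightarrow> G1 *v Y + b1 = G2 *v Y + b2"
    and "Nbar lp mp n *v vecG G1 = Nbar lm mm n *v vecG G2"
  shows "is_ife K T D n F lp mp lm mm (\<lambda>Y. G1 *v Y + b1, \<lambda>Y. G2 *v Y + b2)"
proof -
  have s: "stress lp mp (\<lambda>Y. G1 *v Y + b1) F *v n = stress lm mm (\<lambda>Y. G2 *v Y + b2) F *v n"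
    using stress_lin[OF jac_lin, of lp mp G1 b1 F n] stress_lin[OF jac_lin, of lm mm G2 b2 F n] assms(2)
    by (simp add: vec_eq_iff forall_2)
  have "\<exists>cp cm. (\<lambda>Y. G1 *v Y + b1) = polyv K cp \<and> (\<lambda>Y. G2 *v Y + b2) = polyv K cm \<and> (K\<noteq>Tri \<longrightarrow> cp 3 = cm 3)"
    by (rule exI[of _ "lc G1 b1"], rule exI[of _ "lc G2 b2"]) (simp add: lin_polyv lc_def)
  then show ?thesis unfolding is_ife_def fst_conv snd_conv using assms(1) s by simp
qed

lemma vecG_0 [simp]: "vecG 0 = 0" by (simp add: vecG_def vec_eq_iff forall_4)

lemma is_ife_zero: "is_ife K T D n F lp mp lm mm (\<lambda>Y. 0, \<lambda>Y. 0)"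
  using is_ife_lin[of T D n 0 0 0 0 lp mp lm mm K F] by simp

lemma is_ife_sum:
  assumes "finite S" "\<And>i. i \<in> S \<Longrightarrow> is_ife K T D n F lp mp lm mm (f i)"
    "\<And>i. i \<in> S \<Longrightarrow> is_ife K T D n F lp mp lm mm (g i)"
  shows "is_ife K T D n F lp mp lm mm ((\<lambda>Y. \<Sum>i\<in>S. a i *\<^sub>R fst (f i) Y + b i *\<^sub>R fst (g i) Y),
                                       (\<lambda>Y. \<Sum>i\<in>S. a i *\<^sub>R snd (f i) Y + b i *\<^sub>R snd (g i) Y))"
  using assms
proof (induction S rule: finite_induct)
  case empty
  then show ?case using is_ife_zero by simp
next
  case (insert x S)
  have IH: "is_ife K T D n F lp mp lm mm ((\<lambda>Y. \<Sum>i\<in>S. a i *\<^sub>R fst (f i) Y + b i *\<^sub>R fst (g i) Y),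
                                       (\<lambda>Y. \<Sum>i\<in>S. a i *\<^sub>R snd (f i) Y + b i *\<^sub>R snd (g i) Y))"
    using insert by blast
  show ?case
    using is_ife_comb[OF insert.prems(1)[of x] insert.prems(2)[of x] IH, of "a x" "b x"] insert(1,2)
    by (simp add: add.assoc)
qed

lemma nodal_val_sum:
  "nodal_val D n ((\<lambda>Y. \<Sum>i\<in>S. a i *\<^sub>R fst (f i) Y + b i *\<^sub>R fst (g i) Y),
                                       (\<lambda>Y. \<Sum>i\<in>S. a i *\<^sub>R snd (f i) Y + b i *\<^sub>R snd (g i) Y)) P
   = (\<Sum>i\<in>S. a i *\<^sub>R nodal_val D n (f i) P + b i *\<^sub>R nodal_val D n (g i) P)"
  by (simp add: nodal_val_def)

lemma shape_prop:
  assumes "unisolvent K T A D n F lp mp lm mm"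
  shows "is_ife K T D n F lp mp lm mm (shape K T A D n F lp mp lm mm k) \<and>
        (\<forall>j<nnodes K. nodal_val D n (shape K T A D n F lp mp lm mm k) (A j) =
            (if k < nnodes K then vector [if j = k then 1 else 0, 0]
             else vector [0, if j + nnodes K = k then 1 else 0]))"
proof -
  let ?w = "\<lambda>j. (if k < nnodes K then vector [if j = k then 1 else 0, 0]
             else vector [0, if j + nnodes K = k then 1 else 0]) :: real^2"
  let ?P = "\<lambda>v. is_ife K T D n F lp mp lm mm v \<and> (\<forall>i<nnodes K. nodal_val D n v (A i) = ?w i)"
  have ex: "\<exists>!v. ?P v"
    using assms unfolding unisolvent_def by (rule allE)
  have e: "shape K T A D n F lp mp lm mm k = (THE v. ?P v)"
    unfolding shape_def ..
  have "?P (THE v. ?P v)" by (rule theI'[OF ex])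
  then show ?thesis unfolding e .
qed

lemma quad_shape:
  assumes "unisolvent K T A D n F lp mp lm mm"
  shows "quad (fst (shape K T A D n F lp mp lm mm k))" "quad (snd (shape K T A D n F lp mp lm mm k))"
  using shape_prop[OF assms, of k] unfolding is_ife_def by (auto intro: quad_polyv)

lemma PhiS_eq: "PhiS K T A D n F lp mp lm mm s i = (\<lambda>Y. transpose (vector
   [if s then fst (shape K T A D n F lp mp lm mm i) Y else snd (shape K T A D n F lp mp lm mm i) Y,
    if s then fst (shape K T A D n F lp mp lm mm (i + nnodes K)) Y else snd (shape K T A D n F lp mp lm mm (i + nnodes K)) Y]))"
  by (rule ext) (simp add: PhiS_def Let_def)

lemma quad_PhiS:
  assumes "unisolvent K T A D n F lp mp lm mm"
  shows "quad (PhiS K T A D n F lp mp lm mm s i)"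
proof -
  have q: "quad (\<lambda>Y. if s then fst (shape K T A D n F lp mp lm mm k) Y else snd (shape K T A D n F lp mp lm mm k) Y)" for k
  proof (cases s)
    case True
    then show ?thesis using quad_shape(1)[OF assms, of k] by (simp add: eta_contract_eq)
  next
    case False
    then show ?thesis using quad_shape(2)[OF assms, of k] by (simp add: eta_contract_eq)
  qed
  show ?thesis unfolding PhiS_eq by (rule quad_tv[OF q q])
qed



lemma core:
  assumes unis: "unisolvent K T A D nbar F lp mp lm mm"
    and pos: "lp > 0" "mp > 0" "lm > 0" "mm > 0"
    and nn: "nbar$1 * nbar$1 + nbar$2 * nbar$2 = 1"
    and Xb: "\<forall>i. on_l D nbar (Xb i)"
  shows "(\<Sum>i<nnodes K. kron_row (A i - X) (PhiS K T A D nbar F lp mp lm mm s i Y))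
     + (\<Sum>i\<in>Iside K A D nbar (\<not> s). kron_row (A i - Xb i) (PhiS K T A D nbar F lp mp lm mm s i Y)
          ** (Mbar s lp mp lm mm nbar - mat 1)) = kron_row (Y - X) (mat 1)"
proof -
  let ?Phi = "PhiS K T A D nbar F lp mp lm mm s"
  let ?sh = "shape K T A D nbar F lp mp lm mm"
  let ?I = "Iside K A D nbar (\<not> s)"
  let ?nn = "nnodes K"
  define N where "N = Nbar (lame s lp lm) (lame s mp mm) nbar"
  define N' where "N' = Nbar (lame (\<not> s) lp lm) (lame (\<not> s) mp mm) nbar"
  define M where "M = Mbar s lp mp lm mm nbar"
  have M_def': "M = matrix_inv N' ** N" unfolding M_def Mbar_def N_def N'_def ..
  have invN': "invertible N'" unfolding N'_def by (rule Nbar_inv) (use pos nn in \<open>auto simp: lame_def\<close>)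
  have key: "\<And>w. N' *v (M *v w) = N *v w"
    by (simp add: M_def' matrix_vector_mul_assoc matrix_mul_assoc matrix_inv_right'[OF invN'])
  have finI: "finite ?I" "?I \<subseteq> {..<?nn}" by (auto simp: Iside_def)
  show ?thesis
  proof (rule matrix_eq[THEN iffD2], rule allI)
    fix w :: "real^4"
    define G where "G = unvec w"
    define G' where "G' = unvec (M *v w)"
    have wG: "w = vecG G" unfolding G_def by simp
    have wG': "M *v w = vecG G'" unfolding G'_def by simp
    have keyG: "N' *v vecG G' = N *v vecG G" using key wG wG' by metis
    have r3: "-nbar$2 * (G'-G)$1$1 + nbar$1 * (G'-G)$1$2 = 0"
      using arg_cong[OF keyG, of "\<lambda>x. x$3"] unfolding N_def N'_def Nbar_rows
      by (simp add: vecG_def algebra_simps)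
    have r4: "-nbar$2 * (G'-G)$2$1 + nbar$1 * (G'-G)$2$2 = 0"
      using arg_cong[OF keyG, of "\<lambda>x. x$4"] unfolding N_def N'_def Nbar_rows
      by (simp add: vecG_def algebra_simps)
    have tang: "(G' - G) *v u = 0" if "u \<bullet> nbar = 0" for u
    proof -
      have un: "u$1 * nbar$1 + u$2 * nbar$2 = 0" using that by (simp add: inner_vec_def sum_2)
      show ?thesis
        using tang_scalar[OF r3 un nn] tang_scalar[OF r4 un nn]
        by (simp add: vec_eq_iff forall_2 matrix_vector_mult_def sum_2)
    qed
    define bo where "bo = - (G *v X) - (G' - G) *v D"
    define vsf where "vsf = (\<lambda>Y. G *v Y + - (G *v X))"
    define vof where "vof = (\<lambda>Y. G' *v Y + bo)"
    define v where "v = (if s then (vsf, vof) else (vof, vsf))"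
    have vof_eq: "vof Z = vsf Z + (G' - G) *v (Z - D)" for Z
      by (simp add: vof_def vsf_def bo_def matrix_vector_mult_diff_rdistrib matrix_vector_mult_diff_distrib algebra_simps)
    have vsf_eq: "vsf Z = G *v (Z - X)" for Z
      by (simp add: vsf_def matrix_vector_mult_diff_distrib)
    have cont: "vof Y = vsf Y" if "(Y - D) \<bullet> nbar = 0" for Y
      using vof_eq tang[OF that] by simp
    have shift: "(G' - G) *v (A i - D) = (G' - G) *v (A i - Xb i)" for i
    proof -
      have "(G' - G) *v (Xb i - D) = 0" using Xb tang by (simp add: on_l_def)
      moreover have "A i - D = (A i - Xb i) + (Xb i - D)" by simp
      ultimately show ?thesis by (metis add.right_neutral matrix_vector_right_distrib)
    qed
    have ife_v: "is_ife K T D nbar F lp mp lm mm v"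
    proof (cases s)
      case True
      have e: "v = (\<lambda>Y. G *v Y + - (G *v X), \<lambda>Y. G' *v Y + bo)" using True by (simp add: v_def vsf_def vof_def)
      show ?thesis unfolding e
        by (rule is_ife_lin) (use cont keyG True in \<open>auto simp: on_l_def vsf_def vof_def N_def N'_def lame_def\<close>)
    next
      case False
      have e: "v = (\<lambda>Y. G' *v Y + bo, \<lambda>Y. G *v Y + - (G *v X))" using False by (simp add: v_def vsf_def vof_def)
      show ?thesis unfolding e
        by (rule is_ife_lin) (use cont keyG False in \<open>auto simp: on_l_def vsf_def vof_def N_def N'_def lame_def\<close>)
    qed
    define wv where "wv i = nodal_val D nbar v (A i)" for i
    have wv_eq: "wv i = G *v (A i - X) + (if i \<in> ?I then (G' - G) *v (A i - Xb i) else 0)" if "i < ?nn" for i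
    proof (cases s)
      case True
      then show ?thesis using that vof_eq[of "A i"] shift[of i]
        by (auto simp: wv_def nodal_val_def v_def Iside_def vsf_eq)
    next
      case False
      then show ?thesis using that vof_eq[of "A i"] shift[of i] cont[of "A i"]
        by (auto simp: wv_def nodal_val_def v_def Iside_def vsf_eq)
    qed
    define u where "u = ((\<lambda>Y. \<Sum>i<?nn. (wv i)$1 *\<^sub>R fst (?sh i) Y + (wv i)$2 *\<^sub>R fst (?sh (i + ?nn)) Y),
                         (\<lambda>Y. \<Sum>i<?nn. (wv i)$1 *\<^sub>R snd (?sh i) Y + (wv i)$2 *\<^sub>R snd (?sh (i + ?nn)) Y))"
    have ife_u: "is_ife K T D nbar F lp mp lm mm u"
      unfolding u_def by (rule is_ife_sum) (use shape_prop[OF unis] in auto)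
    have nod_u: "nodal_val D nbar u (A j) = wv j" if "j < ?nn" for j
    proof -
      have "nodal_val D nbar u (A j) = (\<Sum>i<?nn. (wv i)$1 *\<^sub>R nodal_val D nbar (?sh i) (A j)
                + (wv i)$2 *\<^sub>R nodal_val D nbar (?sh (i + ?nn)) (A j))"
        unfolding u_def by (rule nodal_val_sum)
      also have "\<dots> = (\<Sum>i<?nn. (wv i)$1 *\<^sub>R vector [if j = i then 1 else 0, 0]
                + (wv i)$2 *\<^sub>R vector [0, if j = i then 1 else 0])"
        by (rule sum.cong) (use shape_prop[OF unis] that in auto)
      also have "\<dots> = (\<Sum>i<?nn. if j = i then wv i else 0)"
        by (rule sum.cong) (auto simp: vec_eq_iff forall_2)
      also have "\<dots> = wv j"
        using that by simp
      finally show ?thesis .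
    qed
    have "\<exists>!v. is_ife K T D nbar F lp mp lm mm v \<and> (\<forall>i<?nn. nodal_val D nbar v (A i) = wv i)"
      using unis unfolding unisolvent_def by blast
    note ex1 = this
    have Pu: "is_ife K T D nbar F lp mp lm mm u \<and> (\<forall>i<?nn. nodal_val D nbar u (A i) = wv i)"
      using ife_u nod_u by blast
    have Pv: "is_ife K T D nbar F lp mp lm mm v \<and> (\<forall>i<?nn. nodal_val D nbar v (A i) = wv i)"
      using ife_v by (simp add: wv_def)
    have uv: "u = v" using ex1 Pu Pv by (elim ex1E) blast
    have sel: "(if s then fst u Y else snd u Y) = G *v (Y - X)"
      using uv by (cases s) (simp_all add: v_def vsf_eq)
    have phi: "?Phi i Y *v x = x$1 *\<^sub>R (if s then fst (?sh i) Y else snd (?sh i) Y)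
            + x$2 *\<^sub>R (if s then fst (?sh (i + ?nn)) Y else snd (?sh (i + ?nn)) Y)" for i x
      unfolding PhiS_eq by (rule phi_mv)
    have sel2: "(if s then fst u Y else snd u Y) = (\<Sum>i<?nn. ?Phi i Y *v wv i)"
      unfolding phi by (cases s) (simp_all add: u_def)
    have Ms: "(M - mat 1) *v w = M *v w - w" by (simp add: matrix_vector_mult_diff_rdistrib)
    have "((\<Sum>i<?nn. kron_row (A i - X) (?Phi i Y)) + (\<Sum>i\<in>?I. kron_row (A i - Xb i) (?Phi i Y) ** (M - mat 1))) *v w
        = (\<Sum>i<?nn. ?Phi i Y *v (G *v (A i - X))) + (\<Sum>i\<in>?I. ?Phi i Y *v ((G' - G) *v (A i - Xb i)))"
      by (simp add: matrix_vector_mult_add_rdistrib sum_mv kron_mv matrix_vector_mul_assoc[symmetric] Ms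
          unvec_diff G_def[symmetric] G'_def[symmetric])
    also have "(\<Sum>i\<in>?I. ?Phi i Y *v ((G' - G) *v (A i - Xb i)))
        = (\<Sum>i<?nn. ?Phi i Y *v (if i \<in> ?I then (G' - G) *v (A i - Xb i) else 0))"
      by (rule sum.mono_neutral_cong_left) (use finI in auto)
    also have "(\<Sum>i<?nn. ?Phi i Y *v (G *v (A i - X))) + \<dots> = (\<Sum>i<?nn. ?Phi i Y *v wv i)"
      by (simp add: wv_eq matrix_vector_right_distrib sum.distrib[symmetric])
    also have "\<dots> = G *v (Y - X)" using sel sel2 by simp
    also have "\<dots> = kron_row (Y - X) (mat 1) *v w" by (simp add: kron_id_mv G_def)
    finally show "((\<Sum>i<?nn. kron_row (A i - X) (?Phi i Y)) + (\<Sum>i\<in>?I. kron_row (A i - Xb i) (?Phi i Y)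
          ** (Mbar s lp mp lm mm nbar - mat 1))) *v w = kron_row (Y - X) (mat 1) *v w"
      unfolding M_def .
  qed
qed


lemma pd_expand:
  fixes n :: nat and I :: "nat set"
  assumes "finite I" "\<And>i. quad (Q i)"
  shows "pd j (\<lambda>Y. (\<Sum>i<n. kron_row (a i) (Q i Y)) + (\<Sum>i\<in>I. kron_row (b i) (Q i Y) ** M)) Z
     = (\<Sum>i<n. kron_row (a i) (pd j (Q i) Z)) + (\<Sum>i\<in>I. kron_row (b i) (pd j (Q i) Z) ** M)"
proof -
  have q1: "quad (\<lambda>Y. kron_row (a i) (Q i Y))" for i by (rule quad_lin[OF bl_kron assms(2)])
  have q2: "quad (\<lambda>Y. kron_row (b i) (Q i Y) ** M)" for i by (rule quad_lin[OF bl_kron_rmul assms(2)])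
  have s1: "quad (\<lambda>Y. \<Sum>i<n. kron_row (a i) (Q i Y))" by (rule quad_sum) (auto intro: q1)
  have s2: "quad (\<lambda>Y. \<Sum>i\<in>I. kron_row (b i) (Q i Y) ** M)" by (rule quad_sum) (use assms(1) q2 in auto)
  have "pd j (\<lambda>Y. (\<Sum>i<n. kron_row (a i) (Q i Y)) + (\<Sum>i\<in>I. kron_row (b i) (Q i Y) ** M)) Z
     = pd j (\<lambda>Y. \<Sum>i<n. kron_row (a i) (Q i Y)) Z + pd j (\<lambda>Y. \<Sum>i\<in>I. kron_row (b i) (Q i Y) ** M) Z"
    by (rule pd_add[OF quad_diff[OF s1] quad_diff[OF s2]])
  also have "pd j (\<lambda>Y. \<Sum>i<n. kron_row (a i) (Q i Y)) Z = (\<Sum>i<n. pd j (\<lambda>Y. kron_row (a i) (Q i Y)) Z)"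
    by (rule pd_sum) (auto intro: quad_diff q1)
  also have "pd j (\<lambda>Y. \<Sum>i\<in>I. kron_row (b i) (Q i Y) ** M) Z = (\<Sum>i\<in>I. pd j (\<lambda>Y. kron_row (b i) (Q i Y) ** M) Z)"
    by (rule pd_sum) (use assms(1) quad_diff q2 in auto)
  finally show ?thesis
    using pd_lin[OF quad_diff[OF assms(2)] bl_kron] pd_lin[OF quad_diff[OF assms(2)] bl_kron_rmul] by simp
qed

lemma linear_kron1: "linear (\<lambda>v. kron_row v B)"
  by (rule linearI) (simp_all add: kron_row_def vec_eq_iff forall_2 forall_4 algebra_simps)

lemma pd_kron_lin: "pd j (\<lambda>Y. kron_row (Y - X) (mat 1)) Z = Iblock j"
proof -
  have bl: "bounded_linear (\<lambda>v. kron_row v (mat 1))"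
    using linear_kron1 linear_conv_bounded_linear by blast
  have d: "((\<lambda>Y. Y - X) has_derivative (\<lambda>h. h)) (at Z)" by (auto intro!: derivative_eq_intros)
  have "((\<lambda>Y. kron_row (Y - X) (mat 1)) has_derivative (\<lambda>h. kron_row h (mat 1))) (at Z)"
    using bounded_linear.has_derivative[OF bl d] .
  then have "pd j (\<lambda>Y. kron_row (Y - X) (mat 1)) Z = kron_row (axis j 1) (mat 1)"
    by (rule pd_has_derivative)
  also have "\<dots> = Iblock j"
    using exhaust_2[of j]
    by (auto simp: kron_row_def Iblock_def vec_eq_iff forall_2 forall_4 axis_def mat_def)
  finally show ?thesis .
qed

lemma pd_const: "pd j (\<lambda>Y. c) Z = 0"
  using pd_has_derivative[of "\<lambda>Y. c" "\<lambda>h. 0" Z j] by simp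

theorem mainTheorem15:
  fixes K :: elem_kind and T :: "(real^2) set" and A :: "nat \<Rightarrow> real^2"
    and D E F nbar :: "real^2" and lp mp lm mm :: real
  assumes elem: "is_element K T A"
    and lame_pos: "lp > 0" "mp > 0" "lm > 0" "mm > 0"
    and DE: "D \<in> frontier T" "E \<in> frontier T" "D \<noteq> E"
    and nbar: "norm nbar = 1" "(E - D) \<bullet> nbar = 0"
    and F: "on_l D nbar F"
    and unis: "unisolvent K T A D nbar F lp mp lm mm"
  shows "\<forall>X\<in>T. \<forall>Xb :: nat \<Rightarrow> real^2. (\<forall>i. on_l D nbar (Xb i)) \<longrightarrow>
     (\<forall>s j k.
       let Phi = PhiS K T A D nbar F lp mp lm mm s;
           Ms = Mbar s lp mp lm mm nbar - mat 1;
           I' = Iside K A D nbar (\<not> s)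
       in
       (\<Sum>i<nnodes K. kron_row (A i - X) (Phi i X))
         + (\<Sum>i\<in>I'. kron_row (A i - Xb i) (Phi i X) ** Ms) = 0
     \<and> (\<Sum>i<nnodes K. kron_row (A i - X) (pd j (Phi i) X))
         + (\<Sum>i\<in>I'. kron_row (A i - Xb i) (pd j (Phi i) X) ** Ms) = Iblock j
     \<and> (\<Sum>i<nnodes K. kron_row (A i - X) (pd k (pd j (Phi i)) X))
         + (\<Sum>i\<in>I'. kron_row (A i - Xb i) (pd k (pd j (Phi i)) X) ** Ms) = 0)"
proof (intro ballI allI impI)
  fix X and Xb :: "nat \<Rightarrow> real^2" and s j k
  assume Xb: "\<forall>i. on_l D nbar (Xb i)"
  have nn: "nbar$1 * nbar$1 + nbar$2 * nbar$2 = 1"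
  proof -
    have "nbar \<bullet> nbar = 1" using nbar(1) power2_norm_eq_inner[of nbar] by simp
    then show ?thesis by (simp add: inner_vec_def sum_2)
  qed
  let ?Phi = "PhiS K T A D nbar F lp mp lm mm s"
  let ?Ms = "Mbar s lp mp lm mm nbar - mat 1"
  let ?I = "Iside K A D nbar (\<not> s)"
  have finI: "finite ?I" by (auto simp: Iside_def)
  have Hc: "(\<Sum>i<nnodes K. kron_row (A i - X) (?Phi i Y))
     + (\<Sum>i\<in>?I. kron_row (A i - Xb i) (?Phi i Y) ** ?Ms) = kron_row (Y - X) (mat 1)" for Y
    by (rule core[OF unis lame_pos nn Xb])
  have qP: "quad (?Phi i)" for i by (rule quad_PhiS[OF unis])
  have qP': "quad (pd j (?Phi i))" for i by (rule quad_pd[OF qP])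
  have Hf: "(\<lambda>Y. (\<Sum>i<nnodes K. kron_row (A i - X) (?Phi i Y))
     + (\<Sum>i\<in>?I. kron_row (A i - Xb i) (?Phi i Y) ** ?Ms)) = (\<lambda>Y. kron_row (Y - X) (mat 1))"
    using Hc by (rule ext)
  have p1: "(\<Sum>i<nnodes K. kron_row (A i - X) (?Phi i X))
         + (\<Sum>i\<in>?I. kron_row (A i - Xb i) (?Phi i X) ** ?Ms) = 0"
    using Hc[of X] by (simp add: kron_row_def vec_eq_iff forall_2 forall_4)
  have p2: "(\<Sum>i<nnodes K. kron_row (A i - X) (pd j (?Phi i) Z))
         + (\<Sum>i\<in>?I. kron_row (A i - Xb i) (pd j (?Phi i) Z) ** ?Ms) = Iblock j" for Z
    using pd_expand[where j=j and n="nnodes K" and a="\<lambda>i. A i - X" and b="\<lambda>i. A i - Xb i" and M="Mbar s lp mp lm mm nbar - mat 1" and Z=Z and Q="\<lambda>i. PhiS K T A D nbar F lp mp lm mm s i", OF finI qP]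
    unfolding Hf pd_kron_lin by simp
  have p3: "(\<Sum>i<nnodes K. kron_row (A i - X) (pd k (pd j (?Phi i)) X))
         + (\<Sum>i\<in>?I. kron_row (A i - Xb i) (pd k (pd j (?Phi i)) X) ** ?Ms) = 0"
  proof -
    have "(\<lambda>Y. (\<Sum>i<nnodes K. kron_row (A i - X) (pd j (?Phi i) Y))
         + (\<Sum>i\<in>?I. kron_row (A i - Xb i) (pd j (?Phi i) Y) ** ?Ms)) = (\<lambda>Y. Iblock j)"
      using p2 by (rule ext)
    then show ?thesis
      using pd_expand[where j=k and n="nnodes K" and a="\<lambda>i. A i - X" and b="\<lambda>i. A i - Xb i" and M="Mbar s lp mp lm mm nbar - mat 1" and Z=X and Q="\<lambda>i. pd j (PhiS K T A D nbar F lp mp lm mm s i)", OF finI qP']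
      by (simp add: pd_const)
  qed
  show "let Phi = ?Phi; Ms = ?Ms; I' = ?I in
       (\<Sum>i<nnodes K. kron_row (A i - X) (Phi i X))
         + (\<Sum>i\<in>I'. kron_row (A i - Xb i) (Phi i X) ** Ms) = 0
     \<and> (\<Sum>i<nnodes K. kron_row (A i - X) (pd j (Phi i) X))
         + (\<Sum>i\<in>I'. kron_row (A i - Xb i) (pd j (Phi i) X) ** Ms) = Iblock j
     \<and> (\<Sum>i<nnodes K. kron_row (A i - X) (pd k (pd j (Phi i)) X))
         + (\<Sum>i\<in>I'. kron_row (A i - Xb i) (pd k (pd j (Phi i)) X) ** Ms) = 0"
    unfolding Let_def using p1 p2[of X] p3 by blast
qed

end
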